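(* Let $\Omega\subset\mathbb{R}^d$ be a nonempty open bounded convex set, $U\subset\mathbb{R}^m$ compact, and $f:\overline\Omega\times U\to\mathbb{R}^d$ continuous. For $h>0$ and $x\in\overline\Omega$ let $U_h(x)=\{u\in U:\ x+hf(x,u)\in\Omega\}$. Then there exists $h>0$ such that $U_h(x)\neq\emptyset$ for every $x\in\overline\Omega$ if and only if $$\forall x\in\partial\Omega\ \ \exists u\in U:\quad f(x,u)\in\operatorname{int}T_{\overline\Omega}(x),$$ where $\operatorname{int}T_{\overline\Omega}(x):=\bigcup_{s>0}\frac1s(\Omega-x)$.
   Context: $\frac1s(\Omega-x)=\{(z-x)/s:z\in\Omega\}$; $\operatorname{int}T_{\overline\Omega}(x)$ denotes the interior of the tangent cone to the convex set $\overline\Omega$ at $x$, which for convex $\Omega$ equals $\bigcup_{s>0}\frac1s(\Omega-x)$. *)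

theory Defs
  imports "HOL-Analysis.Analysis"
begin

definition int_tangent_cone :: "'a::real_normed_vector set \<Rightarrow> 'a \<Rightarrow> 'a set" where
  "int_tangent_cone \<Omega> x = (\<Union>s\<in>{s::real. s > 0}. (\<lambda>z. (1/s) *\<^sub>R (z - x)) ` \<Omega>)"

definition admissible_controls ::
  "'a::real_normed_vector set \<Rightarrow> 'b set \<Rightarrow> ('a \<Rightarrow> 'b \<Rightarrow> 'a) \<Rightarrow> real \<Rightarrow> 'a \<Rightarrow> 'b set" where
  "admissible_controls \<Omega> U f h x = {u \<in> U. x + h *\<^sub>R f x u \<in> \<Omega>}"

end

theory Submission
  imports Defs
begin

lemma seg_lemma:
  fixes \<Omega> :: "'d::euclidean_space set"
  assumes "open \<Omega>" "convex \<Omega>" "y \<in> closure \<Omega>" "y + s *\<^sub>R v \<in> \<Omega>" "0 < t" "t \<le> s"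
  shows "y + t *\<^sub>R v \<in> \<Omega>"
proof -
  have "y - (t/s) *\<^sub>R (y - (y + s *\<^sub>R v)) \<in> interior \<Omega>"
    by (rule mem_interior_closure_convex_shrink) (use assms interior_open in auto)
  moreover have "y - (t/s) *\<^sub>R (y - (y + s *\<^sub>R v)) = y + t *\<^sub>R v"
    using assms by (simp add: algebra_simps)
  ultimately show ?thesis using assms interior_open by auto
qed

theorem proposition2p4:
  fixes \<Omega> :: "'d::euclidean_space set"
    and U :: "'m::euclidean_space set"
    and f :: "'d \<Rightarrow> 'm \<Rightarrow> 'd"
  assumes "\<Omega> \<noteq> {}" and "open \<Omega>" and "bounded \<Omega>" and "convex \<Omega>"
    and "compact U"
    and "continuous_on (closure \<Omega> \<times> U) (\<lambda>(x, u). f x u)"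
  shows "(\<exists>h>0. \<forall>x\<in>closure \<Omega>. admissible_controls \<Omega> U f h x \<noteq> {}) \<longleftrightarrow>
         (\<forall>x\<in>frontier \<Omega>. \<exists>u\<in>U. f x u \<in> int_tangent_cone \<Omega> x)"
proof
  assume "\<exists>h>0. \<forall>x\<in>closure \<Omega>. admissible_controls \<Omega> U f h x \<noteq> {}"
  then obtain h where h: "h > 0" "\<forall>x\<in>closure \<Omega>. admissible_controls \<Omega> U f h x \<noteq> {}" by blast
  show "\<forall>x\<in>frontier \<Omega>. \<exists>u\<in>U. f x u \<in> int_tangent_cone \<Omega> x"
  proof
    fix x assume "x \<in> frontier \<Omega>"
    hence "x \<in> closure \<Omega>" by (simp add: frontier_def)
    then obtain u where u: "u \<in> U" "x + h *\<^sub>R f x u \<in> \<Omega>"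
      using h unfolding admissible_controls_def by blast
    have "f x u = (1/h) *\<^sub>R ((x + h *\<^sub>R f x u) - x)" using h by simp
    hence "f x u \<in> int_tangent_cone \<Omega> x"
      unfolding int_tangent_cone_def using h u by blast
    thus "\<exists>u\<in>U. f x u \<in> int_tangent_cone \<Omega> x" using u by blast
  qed
next
  assume H: "\<forall>x\<in>frontier \<Omega>. \<exists>u\<in>U. f x u \<in> int_tangent_cone \<Omega> x"
  have "\<Omega> \<noteq> UNIV" using assms(3) not_bounded_UNIV by auto
  hence "frontier \<Omega> \<noteq> {}" using assms(1) frontier_not_empty by blast
  hence Une: "U \<noteq> {}" using H by blast
  have ex: "\<exists>u\<in>U. \<exists>s>0. x + s *\<^sub>R f x u \<in> \<Omega>" if x: "x \<in> closure \<Omega>" for x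
  proof (cases "x \<in> \<Omega>")
    case True
    obtain u where u: "u \<in> U" using Une by blast
    obtain e where e: "e > 0" "ball x e \<subseteq> \<Omega>" using True assms(2) open_contains_ball by blast
    define s where "s = e / (norm (f x u) + 1)"
    have s: "s > 0" using e unfolding s_def by (intro divide_pos_pos) (auto intro: add_nonneg_pos)
    have "norm (s *\<^sub>R f x u) = s * norm (f x u)" using s by simp
    also have "\<dots> < e" unfolding s_def using e
      by (simp add: field_simps add_pos_nonneg)
    finally have "x + s *\<^sub>R f x u \<in> ball x e" by (simp add: dist_norm)
    thus ?thesis using u s e by blast
  next
    case False
    hence "x \<in> frontier \<Omega>" using x assms(2) by (simp add: frontier_def interior_open)
    then obtain u where u: "u \<in> U" "f x u \<in> int_tangent_cone \<Omega> x" using H by blast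
    then obtain s z where sz: "s > 0" "z \<in> \<Omega>" "f x u = (1/s) *\<^sub>R (z - x)"
      unfolding int_tangent_cone_def by blast
    have "x + s *\<^sub>R f x u = z" using sz by simp
    thus ?thesis using u sz by blast
  qed
  have loc: "\<exists>u s V. u \<in> U \<and> s > 0 \<and> open V \<and> x \<in> V \<and>
      (\<forall>y\<in>V \<inter> closure \<Omega>. y + s *\<^sub>R f y u \<in> \<Omega>)" if x: "x \<in> closure \<Omega>" for x
  proof -
    obtain u s where us: "u \<in> U" "s > 0" "x + s *\<^sub>R f x u \<in> \<Omega>" using ex[OF x] by blast
    have c1: "continuous_on (closure \<Omega>) (\<lambda>y. (\<lambda>(x, u). f x u) (y, u))"
      by (rule continuous_on_compose2[OF assms(6)]) (auto intro!: continuous_intros simp: us)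
    have "continuous_on (closure \<Omega>) (\<lambda>y. y + s *\<^sub>R f y u)"
      using c1 by (auto intro!: continuous_intros)
    then obtain A where A: "open A" "A \<inter> closure \<Omega> = (\<lambda>y. y + s *\<^sub>R f y u) -` \<Omega> \<inter> closure \<Omega>"
      using assms(2) unfolding continuous_on_open_invariant by blast
    have "x \<in> A" using A(2) x us by blast
    thus ?thesis using A us by blast
  qed
  define W where "W x = (SOME p. fst p \<in> U \<and> fst (snd p) > 0 \<and> open (snd (snd p)) \<and> x \<in> snd (snd p) \<and>
      (\<forall>y\<in>snd (snd p) \<inter> closure \<Omega>. y + fst (snd p) *\<^sub>R f y (fst p) \<in> \<Omega>))" for x
  have W: "fst (W x) \<in> U \<and> fst (snd (W x)) > 0 \<and> open (snd (snd (W x))) \<and> x \<in> snd (snd (W x)) \<and>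
      (\<forall>y\<in>snd (snd (W x)) \<inter> closure \<Omega>. y + fst (snd (W x)) *\<^sub>R f y (fst (W x)) \<in> \<Omega>)"
    if x: "x \<in> closure \<Omega>" for x
  proof -
    obtain u s V where "u \<in> U \<and> s > 0 \<and> open V \<and> x \<in> V \<and>
      (\<forall>y\<in>V \<inter> closure \<Omega>. y + s *\<^sub>R f y u \<in> \<Omega>)" using loc[OF x] by blast
    hence "\<exists>p. fst p \<in> U \<and> fst (snd p) > 0 \<and> open (snd (snd p)) \<and> x \<in> snd (snd p) \<and>
      (\<forall>y\<in>snd (snd p) \<inter> closure \<Omega>. y + fst (snd p) *\<^sub>R f y (fst p) \<in> \<Omega>)"
      by (intro exI[of _ "(u, s, V)"]) simp
    thus ?thesis unfolding W_def by (rule someI_ex)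
  qed
  have cpt: "compact (closure \<Omega>)" using assms(3) by (simp add: compact_closure)
  obtain C where C: "C \<subseteq> closure \<Omega>" "finite C" "closure \<Omega> \<subseteq> (\<Union>x\<in>C. snd (snd (W x)))"
    by (rule compactE_image[OF cpt, of "closure \<Omega>" "\<lambda>x. snd (snd (W x))"]) (use W in blast)+
  have Cne: "C \<noteq> {}" using C(3) assms(1) closure_subset by blast
  define h where "h = Min ((\<lambda>x. fst (snd (W x))) ` C)"
  have hpos: "h > 0" unfolding h_def using C Cne W by (subst Min_gr_iff) auto
  have hle: "h \<le> fst (snd (W x))" if "x \<in> C" for x
    unfolding h_def using C(2) that by (intro Min_le) auto
  show "\<exists>h>0. \<forall>x\<in>closure \<Omega>. admissible_controls \<Omega> U f h x \<noteq> {}"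
  proof (intro exI[of _ h] conjI ballI hpos)
    fix y assume y: "y \<in> closure \<Omega>"
    then obtain x where x: "x \<in> C" "y \<in> snd (snd (W x))" using C(3) by blast
    have xc: "x \<in> closure \<Omega>" using x C by blast
    have "y + fst (snd (W x)) *\<^sub>R f y (fst (W x)) \<in> \<Omega>" using W[OF xc] x y by blast
    hence "y + h *\<^sub>R f y (fst (W x)) \<in> \<Omega>"
      by (rule seg_lemma[OF assms(2) assms(4) y _ hpos hle[OF x(1)]])
    thus "admissible_controls \<Omega> U f h y \<noteq> {}"
      unfolding admissible_controls_def using W[OF xc] by blast
  qed
qed

end
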